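(* For an integer $m\ge0$ let $\mathbf{S}_m=\{1,\dots,m\}^2$, and let $B_{\mathbf{S}}(m,k)$ be the number of $k$-element subsets of $\mathbf{S}_m$ no two distinct elements $(i,j),(i',j')$ of which satisfy $i-j=i'-j'$ or $i+j=i'+j'$ (nonattacking placements of $k$ bishops). Then for all integers $m,k\ge 0$, $$B_{\mathbf{S}}(m,k)=\sum_{j=0}^{k}\sum_{i=0}^{j}\binom{\lfloor m/2\rfloor}{i}\left\{ {m-i \atop m-j}\right\}\sum_{l=0}^{k-j}\binom{\lceil m/2\rceil}{l}\left\{ {m-l \atop m-k+j}\right\}.$$
   Context: The Stirling numbers of the second kind $\left\{ {n \atop r}\right\}$ are used in the extended sense for all integers $n,r$: for $n,r\ge0$ they are the usual ones; for $n,r\le 0$, $\left\{ {n \atop r}\right\}=\left[{-r \atop -n}\right]$, the unsigned Stirling number of the first kind; and they are $0$ when one of $n,r$ is positive and the other negative (Knuth's extension, satisfying $\left\{ {n \atop r}\right\}=r\left\{ {n-1 \atop r}\right\}+\left\{ {n-1 \atop r-1}\right\}$ for all integers). *)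

theory Defs
  imports Main "HOL-Combinatorics.Stirling"
begin

text \<open>Knuth's extension of the Stirling numbers of the second kind to all integers:
  usual values for n, r \<ge> 0; unsigned first-kind [ -r, -n ] for n, r \<le> 0; 0 otherwise.\<close>
definition Stirling2_ext :: "int \<Rightarrow> int \<Rightarrow> int" where
  "Stirling2_ext n r =
     (if 0 \<le> n \<and> 0 \<le> r then int (Stirling (nat n) (nat r))
      else if n \<le> 0 \<and> r \<le> 0 then int (stirling (nat (- r)) (nat (- n)))
      else 0)"

definition board_S :: "nat \<Rightarrow> (int \<times> int) set" where
  "board_S m = {1..int m} \<times> {1..int m}"

definition nonattacking_bishops :: "(int \<times> int) set \<Rightarrow> bool" where
  "nonattacking_bishops A \<longleftrightarrow>
     (\<forall>p\<in>A. \<forall>q\<in>A. p \<noteq> q \<longrightarrow>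
        fst p - snd p \<noteq> fst q - snd q \<and> fst p + snd p \<noteq> fst q + snd q)"

definition B_S :: "nat \<Rightarrow> nat \<Rightarrow> nat" where
  "B_S m k = card {A. A \<subseteq> board_S m \<and> card A = k \<and> nonattacking_bishops A}"

end

theory Submission
  imports Defs
begin


lemma ext_neg: "0 \<le> n \<Longrightarrow> r < 0 \<Longrightarrow> Stirling2_ext n r = 0"
  unfolding Stirling2_ext_def by (cases "n = 0") auto

lemma ext_big: "0 \<le> n \<Longrightarrow> n < r \<Longrightarrow> Stirling2_ext n r = 0"
  unfolding Stirling2_ext_def by (auto intro!: Stirling_less simp: nat_less_eq_zless)

lemma ext_same: "0 \<le> n \<Longrightarrow> Stirling2_ext n n = 1"
  unfolding Stirling2_ext_def by simp

lemma ext_nat: "Stirling2_ext (int a) (int b) = int (Stirling a b)"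
  unfolding Stirling2_ext_def by simp

lemma ext_rec_nat: "Stirling2_ext (int a + 1) r = r * Stirling2_ext (int a) r + Stirling2_ext (int a) (r-1)"
proof -
  consider "r < 0" | "r = 0" | b where "r = int (Suc b)"
    by (metis linorder_neqE_linordered_idom not0_implies_Suc of_nat_0 pos_int_cases)
  then show ?thesis
  proof cases
    case 1
    then show ?thesis using ext_neg[of "int a" r] ext_neg[of "int a + 1" r] ext_neg[of "int a" "r-1"] by simp
  next
    case 2
    have e: "int a + 1 = int (Suc a)" by simp
    have "Stirling2_ext (int (Suc a)) (int 0) = 0" by (simp only: ext_nat) simp
    hence "Stirling2_ext (int a + 1) 0 = 0" by (simp only: e of_nat_0)
    then show ?thesis using 2 ext_neg[of "int a" "-1"] by simp
  next
    case 3
    have e1: "int a + 1 = int (Suc a)" by simp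
    have e2: "r - 1 = int b" using 3 by simp
    have "Stirling (Suc a) (Suc b) = Suc b * Stirling a (Suc b) + Stirling a b" by simp
    hence "int (Stirling (Suc a) (Suc b)) = int (Suc b) * int (Stirling a (Suc b)) + int (Stirling a b)"
      by (metis of_nat_add of_nat_mult)
    then show ?thesis unfolding e1 e2 unfolding 3 ext_nat .
  qed
qed

lemma ext_rec: assumes "0 \<le> n"
  shows "Stirling2_ext (n+1) r = r * Stirling2_ext n r + Stirling2_ext n (r-1)"
  using ext_rec_nat[of "nat n" r] assms by simp

definition F :: "nat \<Rightarrow> nat \<Rightarrow> nat \<Rightarrow> int" where
  "F b n k = (\<Sum>i = 0..k. int (b choose i) * Stirling2_ext (int n - int i) (int n - int k))"

lemma term_rec:
  assumes "b \<le> n"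
  shows "int (b choose i) * Stirling2_ext (int (Suc n) - int i) (int n - int k) =
    (int n - int k) * (int (b choose i) * Stirling2_ext (int n - int i) (int n - int k)) +
    int (b choose i) * Stirling2_ext (int n - int i) (int n - int (Suc k))"
proof (cases "i \<le> n")
  case True
  have E: "Stirling2_ext (int (Suc n) - int i) (int n - int k) =
    (int n - int k) * Stirling2_ext (int n - int i) (int n - int k) + Stirling2_ext (int n - int i) (int n - int (Suc k))"
    using ext_rec[of "int n - int i" "int n - int k"] True by (simp add: algebra_simps)
  show ?thesis by (simp only: E) (simp add: algebra_simps)
next
  case False
  then have "b choose i = 0" using assms by simp
  then show ?thesis by (simp only: of_nat_0 mult_zero_left mult_zero_right add_0)
qed

lemma extra_zero:
  assumes "b \<le> n"
  shows "int (b choose Suc k) * Stirling2_ext (int n - int (Suc k)) (int n - int k) = 0"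
proof (cases "Suc k \<le> n")
  case True
  then show ?thesis by (simp add: ext_big)
next
  case False
  then show ?thesis using assms by simp
qed

lemma F_rec0:
  assumes "b \<le> n"
  shows "F b (Suc n) (Suc k) = F b n (Suc k) + (int n - int k) * F b n k"
proof -
  have "F b (Suc n) (Suc k) = (\<Sum>i = 0..Suc k. int (b choose i) * Stirling2_ext (int (Suc n) - int i) (int n - int k))"
    unfolding F_def by (intro sum.cong) auto
  also have "\<dots> = (\<Sum>i = 0..Suc k. (int n - int k) * (int (b choose i) * Stirling2_ext (int n - int i) (int n - int k)) +
    int (b choose i) * Stirling2_ext (int n - int i) (int n - int (Suc k)))"
    by (intro sum.cong refl term_rec assms)
  also have "\<dots> = (int n - int k) * (\<Sum>i = 0..Suc k. int (b choose i) * Stirling2_ext (int n - int i) (int n - int k))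
     + F b n (Suc k)"
    unfolding F_def sum.distrib sum_distrib_left ..
  also have "(\<Sum>i = 0..Suc k. int (b choose i) * Stirling2_ext (int n - int i) (int n - int k)) = F b n k"
    unfolding F_def sum.atLeast0_atMost_Suc extra_zero[OF assms] by simp
  finally show ?thesis by simp
qed

lemma F_pascal: "F (Suc b) (Suc n) (Suc k) = F b (Suc n) (Suc k) + F b n k"
proof -
  have "F (Suc b) (Suc n) (Suc k) = Stirling2_ext (int (Suc n)) (int n - int k) +
     (\<Sum>i = 0..k. int (Suc b choose Suc i) * Stirling2_ext (int n - int i) (int n - int k))"
    unfolding F_def sum.atLeast0_atMost_Suc_shift by simp
  also have "\<dots> = Stirling2_ext (int (Suc n)) (int n - int k) +
     (\<Sum>i = 0..k. int (b choose Suc i) * Stirling2_ext (int n - int i) (int n - int k)) + F b n k"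
    unfolding F_def by (simp add: sum.distrib algebra_simps)
  also have "Stirling2_ext (int (Suc n)) (int n - int k) +
     (\<Sum>i = 0..k. int (b choose Suc i) * Stirling2_ext (int n - int i) (int n - int k)) = F b (Suc n) (Suc k)"
    unfolding F_def sum.atLeast0_atMost_Suc_shift by simp
  finally show ?thesis .
qed

lemma F_0: "F b n 0 = 1"
  unfolding F_def by (simp add: ext_same)

lemma F_00_aux: "r < 0 \<Longrightarrow> int (0 choose i) * Stirling2_ext (- int i) r = 0"
  by (cases i) (auto simp: ext_neg)

lemma F_00: "F 0 0 (Suc k) = 0"
  unfolding F_def by (intro sum.neutral ballI) (simp add: F_00_aux)


definition Col :: "int \<Rightarrow> int \<Rightarrow> int set" where
  "Col c r = {d. \<bar>d\<bar> \<le> r \<and> d mod 2 = c}"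

definition Gb :: "int \<Rightarrow> nat \<Rightarrow> (int \<times> int) set" where
  "Gb c n = {p. 0 \<le> fst p \<and> fst p < int n \<and> snd p \<in> Col c (fst p)}"

definition rk :: "int \<Rightarrow> nat \<Rightarrow> nat \<Rightarrow> (int \<times> int) set set" where
  "rk c n k = {P. P \<subseteq> Gb c n \<and> card P = k \<and> inj_on fst P \<and> inj_on snd P}"

lemma finite_Col: "finite (Col c r)"
  by (rule finite_subset[of _ "{-r..r}"]) (auto simp: Col_def)

lemma Col_mono: "r \<le> s \<Longrightarrow> Col c r \<subseteq> Col c s"
  by (auto simp: Col_def)

lemma finite_Gb: "finite (Gb c n)"
  by (rule finite_subset[of _ "{0..<int n} \<times> {-int n..int n}"]) (auto simp: Gb_def Col_def)

lemma finite_rk: "finite (rk c n k)"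
  by (rule finite_subset[of _ "Pow (Gb c n)"]) (auto simp: rk_def finite_Gb)

lemma card_Col:
  assumes "c = 0 \<or> c = 1"
  shows "card (Col c (int n)) = n + (if int n mod 2 = c then 1 else 0)"
proof (induction n)
  case 0
  have "Col c 0 = (if c = 0 then {0} else {})" using assms by (auto simp: Col_def)
  then show ?case by simp
next
  case (Suc n)
  define e where "e = int (Suc n)"
  have split: "Col c e = Col c (int n) \<union> (if e mod 2 = c then {e, -e} else {})"
    unfolding e_def Col_def using assms by (auto simp: abs_if split: if_splits) presburger+
  have disj: "Col c (int n) \<inter> (if e mod 2 = c then {e, -e} else {}) = {}"
    unfolding e_def Col_def by auto
  have c2: "card (if e mod 2 = c then {e, -e} else {}) = (if e mod 2 = c then 2 else 0)"
    unfolding e_def by simp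
  have "card (Col c e) = card (Col c (int n)) + (if e mod 2 = c then 2 else 0)"
    unfolding split by (subst card_Un_disjoint) (use disj c2 finite_Col in auto)
  moreover have "(int n mod 2 = c) = (e mod 2 \<noteq> c)" unfolding e_def using assms by presburger
  ultimately show ?case using Suc unfolding e_def by auto
qed


lemma rk_0: "rk c n 0 = {{}}"
proof -
  have "{} \<in> rk c n 0" by (simp add: rk_def)
  moreover have "P = {}" if "P \<in> rk c n 0" for P
    using that finite_subset[OF _ finite_Gb] by (auto simp: rk_def)
  ultimately show ?thesis by blast
qed

lemma rk_G0: "rk c 0 (Suc k) = {}"
proof -
  have "Gb c 0 = {}" by (auto simp: Gb_def)
  then show ?thesis by (auto simp: rk_def)
qed

lemma Gb_Suc: "Gb c (Suc n) = Gb c n \<union> {int n} \<times> Col c (int n)"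
  unfolding Gb_def
  apply (rule set_eqI)
  subgoal for x by (cases "fst x = int n") (auto simp: mem_Times_iff)
  done

lemma rk_snd_sub: assumes "P \<in> rk c n k" shows "snd ` P \<subseteq> Col c (int n)"
proof
  fix d assume "d \<in> snd ` P"
  then obtain r where rd: "(r,d) \<in> P" by force
  then have "r < int n" "d \<in> Col c r" using assms by (auto simp: rk_def Gb_def)
  thus "d \<in> Col c (int n)" using Col_mono[of r "int n" c] by auto
qed

lemma rk_card_le:
  assumes "P \<in> rk c n k" shows "k \<le> card (Col c (int n))"
proof -
  have sub: "snd ` P \<subseteq> Col c (int n)" by (rule rk_snd_sub[OF assms])
  have "k = card (snd ` P)" using assms by (simp add: rk_def card_image)
  also have "\<dots> \<le> card (Col c (int n))" by (rule card_mono[OF finite_Col sub])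
  finally show ?thesis .
qed

lemma rk_rec:
  "card (rk c (Suc n) (Suc k)) = card (rk c n (Suc k)) + card (rk c n k) * (card (Col c (int n)) - k)"
proof -
  define A where "A = {P \<in> rk c (Suc n) (Suc k). \<forall>p\<in>P. fst p \<noteq> int n}"
  define B where "B = {P \<in> rk c (Suc n) (Suc k). \<exists>p\<in>P. fst p = int n}"
  have AB: "rk c (Suc n) (Suc k) = A \<union> B" "A \<inter> B = {}" unfolding A_def B_def by auto
  have finA: "finite A" "finite B" unfolding A_def B_def using finite_rk[of c "Suc n" "Suc k"] by auto
  have A: "A = rk c n (Suc k)"
    unfolding A_def rk_def Gb_def by force
  define S where "S = (SIGMA P:rk c n k. Col c (int n) - snd ` P)"
  define g where "g = (\<lambda>(P::(int\<times>int) set, d::int). insert (int n, d) P)"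
  have rowfree: "\<forall>p\<in>P. fst p < int n" if "P \<in> rk c n k" for P
    using that by (auto simp: rk_def Gb_def)
  have inj: "inj_on g S"
  proof (rule inj_onI)
    fix x y assume x: "x \<in> S" and y: "y \<in> S" and e: "g x = g y"
    obtain P d where xs: "x = (P, d)" by (cases x)
    obtain Q d' where ys: "y = (Q, d')" by (cases y)
    have P: "P \<in> rk c n k" and Q: "Q \<in> rk c n k" using x y xs ys S_def by auto
    have e': "insert (int n, d) P = insert (int n, d') Q" using e xs ys g_def by simp
    have "(int n, d) \<notin> Q" "(int n, d') \<notin> P" using rowfree[OF P] rowfree[OF Q] by auto
    hence "d = d'" using e' by blast
    moreover have "P = Q"
    proof -
      have "P = {p \<in> insert (int n, d) P. fst p \<noteq> int n}" using rowfree[OF P] by auto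
      also have "\<dots> = {p \<in> insert (int n, d') Q. fst p \<noteq> int n}" using e' by simp
      also have "\<dots> = Q" using rowfree[OF Q] by auto
      finally show ?thesis .
    qed
    ultimately show "x = y" using xs ys by simp
  qed
  have img: "g ` S = B"
  proof
    show "g ` S \<subseteq> B"
    proof
      fix X assume "X \<in> g ` S"
      then obtain P d where P: "P \<in> rk c n k" and d: "d \<in> Col c (int n)" "d \<notin> snd ` P"
        and X: "X = insert (int n, d) P" unfolding S_def g_def by auto
      have nin: "(int n, d) \<notin> P" using rowfree[OF P] by auto
      have finP: "finite P" using P finite_subset[OF _ finite_Gb] by (auto simp: rk_def)
      have "X \<subseteq> Gb c (Suc n)" using P d unfolding X Gb_Suc rk_def by auto
      moreover have "card X = Suc k" using P nin finP unfolding X rk_def by simp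
      moreover have "inj_on fst X" using P nin rowfree[OF P] unfolding X rk_def by auto
      moreover have "inj_on snd X" using P nin d unfolding X rk_def by auto
      ultimately show "X \<in> B" unfolding B_def rk_def X by auto
    qed
  next
    show "B \<subseteq> g ` S"
    proof
      fix X assume X: "X \<in> B"
      then obtain p where p: "p \<in> X" "fst p = int n" unfolding B_def by auto
      obtain d where pd: "p = (int n, d)" using p by (cases p) auto
      have XR: "X \<in> rk c (Suc n) (Suc k)" using X B_def by auto
      have finX: "finite X" using XR finite_subset[OF _ finite_Gb] by (auto simp: rk_def)
      define P where "P = X - {p}"
      have injf: "inj_on fst X" and injs: "inj_on snd X" using XR by (auto simp: rk_def)
      have "\<forall>q\<in>P. fst q \<noteq> int n" using injf p unfolding P_def inj_on_def by auto
      moreover have "P \<subseteq> Gb c (Suc n)" using XR unfolding P_def rk_def by auto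
      ultimately have "P \<subseteq> Gb c n" unfolding Gb_Suc by (fastforce simp: mem_Times_iff)
      moreover have "card P = k" using XR p finX unfolding P_def rk_def by simp
      moreover have "inj_on fst P" "inj_on snd P" using injf injs unfolding P_def
        by (auto intro: inj_on_subset)
      ultimately have PR: "P \<in> rk c n k" unfolding rk_def by auto
      have "d \<notin> snd ` P" using injs p pd unfolding P_def inj_on_def by force
      moreover have "d \<in> Col c (int n)" using XR p pd unfolding rk_def Gb_def by auto
      moreover have "X = g (P, d)" unfolding g_def P_def using p pd by auto
      ultimately show "X \<in> g ` S" using PR unfolding S_def by auto
    qed
  qed
  have "card B = card S" using card_image[OF inj] img by simp
  also have "\<dots> = (\<Sum>P\<in>rk c n k. card (Col c (int n) - snd ` P))"
    unfolding S_def by (rule card_SigmaI) (auto simp: finite_rk finite_Col)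
  also have "\<dots> = (\<Sum>P\<in>rk c n k. card (Col c (int n)) - k)"
  proof (rule sum.cong[OF refl])
    fix P assume P: "P \<in> rk c n k"
    have sub: "snd ` P \<subseteq> Col c (int n)" by (rule rk_snd_sub[OF P])
    have "card (snd ` P) = k" using P by (simp add: rk_def card_image)
    then show "card (Col c (int n) - snd ` P) = card (Col c (int n)) - k"
      using card_Diff_subset[OF finite_subset[OF sub finite_Col] sub] by simp
  qed
  also have "\<dots> = card (rk c n k) * (card (Col c (int n)) - k)" by simp
  finally have cB: "card B = card (rk c n k) * (card (Col c (int n)) - k)" .
  show ?thesis using card_Un_disjoint[OF finA AB(2)] cB A AB(1) by simp
qed

lemma rk_rec_int:
  "int (card (rk c (Suc n) (Suc k))) = int (card (rk c n (Suc k))) +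
     (int (card (Col c (int n))) - int k) * int (card (rk c n k))"
proof (cases "rk c n k = {}")
  case True
  then show ?thesis unfolding rk_rec by simp
next
  case False
  then obtain P where "P \<in> rk c n k" by auto
  hence "k \<le> card (Col c (int n))" by (rule rk_card_le)
  then show ?thesis by (simp only: rk_rec of_nat_add of_nat_mult of_nat_diff) (simp add: algebra_simps)
qed


definition bc :: "int \<Rightarrow> nat \<Rightarrow> nat" where
  "bc c n = (if c = 0 then Suc n div 2 else n div 2)"

lemma bc_Suc: "c = 0 \<or> c = 1 \<Longrightarrow> bc c (Suc n) = bc c n + (if int n mod 2 = c then 1 else 0)"
  unfolding bc_def by (auto; presburger)

lemma bc_le: "bc c n \<le> n"
  unfolding bc_def by auto

lemma rk_F:
  assumes c: "c = 0 \<or> c = 1"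
  shows "int (card (rk c n k)) = F (bc c n) n k"
proof (induction n arbitrary: k)
  case 0
  then show ?case
    by (cases k) (auto simp: rk_0 F_0 rk_G0 bc_def F_00)
next
  case (Suc n)
  show ?case
  proof (cases k)
    case 0
    then show ?thesis by (simp add: rk_0 F_0)
  next
    case (Suc k')
    have IH: "int (card (rk c (Suc n) (Suc k'))) = F (bc c n) n (Suc k') +
      (int (card (Col c (int n))) - int k') * F (bc c n) n k'"
      unfolding rk_rec_int Suc.IH ..
    show ?thesis
    proof (cases "int n mod 2 = c")
      case True
      have "bc c (Suc n) = Suc (bc c n)" using bc_Suc[OF c, of n] True by simp
      moreover have "int (card (Col c (int n))) = int n + 1" using card_Col[OF c, of n] True by simp
      ultimately show ?thesis unfolding IH \<open>k = Suc k'\<close>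
        by (simp only: F_pascal F_rec0[OF bc_le]) (simp add: algebra_simps)
    next
      case False
      have "bc c (Suc n) = bc c n" using bc_Suc[OF c, of n] False by simp
      moreover have "int (card (Col c (int n))) = int n" using card_Col[OF c, of n] False by simp
      ultimately show ?thesis unfolding IH \<open>k = Suc k'\<close>
        by (simp only: F_rec0[OF bc_le])
    qed
  qed
qed


definition psum :: "int \<times> int \<Rightarrow> int" where "psum p = fst p + snd p"
definition pdif :: "int \<times> int \<Rightarrow> int" where "pdif p = fst p - snd p"

definition nab :: "(int \<times> int) set \<Rightarrow> nat \<Rightarrow> (int \<times> int) set set" where
  "nab U k = {A. A \<subseteq> U \<and> card A = k \<and> inj_on psum A \<and> inj_on pdif A}"

lemma finite_nab: "finite U \<Longrightarrow> finite (nab U k)"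
  by (rule finite_subset[of _ "Pow U"]) (auto simp: nab_def)

lemma split_count:
  assumes f0: "finite U0" and f1: "finite U1" and disj: "U0 \<inter> U1 = {}"
    and sep: "\<And>x y. x \<in> U0 \<Longrightarrow> y \<in> U1 \<Longrightarrow> psum x \<noteq> psum y \<and> pdif x \<noteq> pdif y"
  shows "card (nab (U0 \<union> U1) k) = (\<Sum>j = 0..k. card (nab U1 j) * card (nab U0 (k - j)))"
proof -
  define T where "T = (SIGMA j:{0..k}. nab U1 j \<times> nab U0 (k - j))"
  define g where "g = (\<lambda>(j::nat, A1::(int\<times>int) set, A0::(int\<times>int) set). A1 \<union> A0)"
  have cT: "card T = (\<Sum>j = 0..k. card (nab U1 j) * card (nab U0 (k - j)))"
    unfolding T_def by (subst card_SigmaI) (auto simp: finite_nab f0 f1 card_cartesian_product)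
  have inj: "inj_on g T"
  proof (rule inj_onI)
    fix x y assume x: "x \<in> T" and y: "y \<in> T" and e: "g x = g y"
    obtain j A1 A0 where xs: "x = (j, A1, A0)" by (cases x) auto
    obtain j' B1 B0 where ys: "y = (j', B1, B0)" by (cases y) auto
    have h: "A1 \<subseteq> U1" "A0 \<subseteq> U0" "B1 \<subseteq> U1" "B0 \<subseteq> U0" "card A1 = j" "card B1 = j'"
      using x y xs ys by (auto simp: T_def nab_def)
    have e': "A1 \<union> A0 = B1 \<union> B0" using e xs ys g_def by simp
    have "A1 = (A1 \<union> A0) \<inter> U1" "B1 = (B1 \<union> B0) \<inter> U1" using h disj by auto
    hence "A1 = B1" using e' by simp
    moreover have "A0 = (A1 \<union> A0) \<inter> U0" "B0 = (B1 \<union> B0) \<inter> U0" using h disj by auto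
    hence "A0 = B0" using e' by simp
    ultimately show "x = y" using xs ys h by simp
  qed
  have img: "g ` T = nab (U0 \<union> U1) k"
  proof
    show "g ` T \<subseteq> nab (U0 \<union> U1) k"
    proof
      fix X assume "X \<in> g ` T"
      then obtain j A1 A0 where j: "j \<le> k" and A1: "A1 \<in> nab U1 j" and A0: "A0 \<in> nab U0 (k - j)"
        and X: "X = A1 \<union> A0" unfolding T_def g_def by auto
      have sub: "A1 \<subseteq> U1" "A0 \<subseteq> U0" using A1 A0 by (auto simp: nab_def)
      have fin: "finite A1" "finite A0" using sub f0 f1 finite_subset by auto
      have dj: "A1 \<inter> A0 = {}" using sub disj by auto
      have "card X = k" unfolding X card_Un_disjoint[OF fin dj] using A1 A0 j by (simp add: nab_def)
      moreover have "inj_on psum X" unfolding X inj_on_Un using A1 A0 sub sep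
        by (auto simp: nab_def) (metis in_mono)
      moreover have "inj_on pdif X" unfolding X inj_on_Un using A1 A0 sub sep
        by (auto simp: nab_def) (metis in_mono)
      ultimately show "X \<in> nab (U0 \<union> U1) k" using sub unfolding X nab_def by auto
    qed
  next
    show "nab (U0 \<union> U1) k \<subseteq> g ` T"
    proof
      fix X assume X: "X \<in> nab (U0 \<union> U1) k"
      define A1 where "A1 = X \<inter> U1"
      define A0 where "A0 = X \<inter> U0"
      have XU: "X \<subseteq> U0 \<union> U1" using X by (simp add: nab_def)
      have XA: "X = A1 \<union> A0" using XU unfolding A1_def A0_def by auto
      have fin: "finite A1" "finite A0" unfolding A1_def A0_def using f0 f1 by auto
      have dj: "A1 \<inter> A0 = {}" unfolding A1_def A0_def using disj by auto
      have ck: "card A1 + card A0 = k" using X card_Un_disjoint[OF fin dj] XA by (simp add: nab_def)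
      have "A1 \<in> nab U1 (card A1)" using X unfolding A1_def nab_def by (auto intro: inj_on_subset)
      moreover have "A0 \<in> nab U0 (card A0)" using X unfolding A0_def nab_def by (auto intro: inj_on_subset)
      hence "A0 \<in> nab U0 (k - card A1)" using ck by (metis add_diff_cancel_left')
      moreover have "card A1 \<le> k" using ck by simp
      ultimately have "(card A1, A1, A0) \<in> T" unfolding T_def by auto
      moreover have "g (card A1, A1, A0) = X" using XA g_def by simp
      ultimately show "X \<in> g ` T" by force
    qed
  qed
  show ?thesis using card_image[OF inj] img cT by simp
qed




definition Uc :: "int \<Rightarrow> nat \<Rightarrow> (int \<times> int) set" where
  "Uc c m = {p \<in> board_S m. (fst p + snd p) mod 2 = c}"

definition rho :: "int \<Rightarrow> nat \<Rightarrow> int \<Rightarrow> int" where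
  "rho c m r = (if (r + 2) mod 2 = c then r + 2 else 2 * int m + 1 - r)"

definition hh :: "int \<Rightarrow> nat \<Rightarrow> int \<times> int \<Rightarrow> int \<times> int" where
  "hh c m p = ((rho c m (fst p) + snd p) div 2, (rho c m (fst p) - snd p) div 2)"

lemma t1: "c = 0 \<or> c = 1 \<Longrightarrow> \<not> (r + 2) mod 2 = c \<Longrightarrow> (2 * int m + 1 - r) mod 2 = (c::int)"
  by presburger
lemma rho_mod: assumes c: "c = 0 \<or> c = 1" shows "rho c m r mod 2 = c"
proof (cases "(r + 2) mod 2 = c")
  case True
  then show ?thesis by (simp add: rho_def)
next
  case False
  have "(2 * int m + 1 - r) mod 2 = c" using t1[OF c False] .
  then show ?thesis using False by (simp add: rho_def)
qed

lemma even_half: "(x::int) mod 2 = 0 \<Longrightarrow> 2 * (x div 2) = x"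
  by (metis add.right_neutral mult_div_mod_eq)

lemma par_sum: "(a::int) mod 2 = c \<Longrightarrow> b mod 2 = c \<Longrightarrow> (a + b) mod 2 = 0 \<and> (a - b) mod 2 = 0"
  by presburger
lemma hh_psum: assumes c: "c = 0 \<or> c = 1" and p: "p \<in> Gb c m"
  shows "psum (hh c m p) = rho c m (fst p)" "pdif (hh c m p) = snd p"
proof -
  have "snd p mod 2 = c" using p by (auto simp: Gb_def Col_def)
  moreover have "rho c m (fst p) mod 2 = c" by (rule rho_mod[OF c])
  ultimately have "(rho c m (fst p) + snd p) mod 2 = 0" "(rho c m (fst p) - snd p) mod 2 = 0"
    using par_sum by blast+
  note e = even_half[OF this(1)] even_half[OF this(2)]
  show "psum (hh c m p) = rho c m (fst p)" "pdif (hh c m p) = snd p"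
    unfolding psum_def pdif_def hh_def fst_conv snd_conv using e by linarith+
qed

lemma rho_inj: assumes "0 \<le> r1" "r1 < int m" "0 \<le> r2" "r2 < int m"
  and "rho c m r1 = rho c m r2" shows "r1 = r2"
  using assms unfolding rho_def by (auto split: if_splits)
lemma hh_inj: assumes c: "c = 0 \<or> c = 1" shows "inj_on (hh c m) (Gb c m)"
proof (rule inj_onI)
  fix p q assume p: "p \<in> Gb c m" and q: "q \<in> Gb c m" and e: "hh c m p = hh c m q"
  have "rho c m (fst p) = psum (hh c m p)" using hh_psum(1)[OF c p] by simp
  also have "\<dots> = psum (hh c m q)" using e by simp
  also have "\<dots> = rho c m (fst q)" using hh_psum(1)[OF c q] .
  finally have rr: "rho c m (fst p) = rho c m (fst q)" .
  have "0 \<le> fst p" "fst p < int m" "0 \<le> fst q" "fst q < int m" using p q by (auto simp: Gb_def)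
  hence "fst p = fst q" using rho_inj rr by blast
  moreover have "snd p = snd q" using hh_psum(2)[OF c p] hh_psum(2)[OF c q] e by simp
  ultimately show "p = q" by (simp add: prod_eq_iff)
qed

lemma rho_cases: "rho c m r = r + 2 \<or> rho c m r = 2 * int m + 1 - r"
  unfolding rho_def by auto

lemma bounds1: "(X::int) + Y = R \<Longrightarrow> X - Y = d \<Longrightarrow> R = r + 2 \<or> R = 2 * M + 1 - r \<Longrightarrow> \<bar>d\<bar> \<le> r \<Longrightarrow>
   0 \<le> r \<Longrightarrow> r < M \<Longrightarrow> 1 \<le> X \<and> X \<le> M \<and> 1 \<le> Y \<and> Y \<le> M"
proof -
  assume a: "X + Y = R" "X - Y = d" "R = r + 2 \<or> R = 2 * M + 1 - r" "\<bar>d\<bar> \<le> r" "0 \<le> r" "r < M"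
  have d: "-r \<le> d" "d \<le> r" using a(4) by auto
  have half: "\<And>Z::int. 2 * Z \<le> 2 * M + 1 \<Longrightarrow> Z \<le> M" by presburger
  from a(3) show ?thesis
  proof
    assume "R = r + 2"
    then show ?thesis using a(1,2,5,6) d by linarith
  next
    assume R: "R = 2 * M + 1 - r"
    have "2 * X \<le> 2 * M + 1" "2 * Y \<le> 2 * M + 1" using R a(1,2) d by linarith+
    then have "X \<le> M" "Y \<le> M" using half by blast+
    then show ?thesis using R a(1,2,5,6) d by linarith
  qed
qed

lemma t2: "c = 0 \<or> c = 1 \<Longrightarrow> ((i::int) + j) mod 2 = c \<Longrightarrow> (i - j) mod 2 = c"
  by presburger

lemma t3: "c = 0 \<or> c = 1 \<Longrightarrow> ((i::int) + j) mod 2 = c \<Longrightarrow> (2 * M + 1 - (i + j) + 2) mod 2 \<noteq> c"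
  by presburger

lemma hh_img: assumes c: "c = 0 \<or> c = 1" shows "hh c m ` Gb c m = Uc c m"
proof
  show "hh c m ` Gb c m \<subseteq> Uc c m"
  proof
    fix x assume "x \<in> hh c m ` Gb c m"
    then obtain r d where rd: "(r, d) \<in> Gb c m" and x: "x = hh c m (r, d)" by auto
    have h: "0 \<le> r" "r < int m" "\<bar>d\<bar> \<le> r" using rd by (auto simp: Gb_def Col_def)
    have s: "fst x + snd x = rho c m r" "fst x - snd x = d"
      using hh_psum[OF c rd] x unfolding psum_def pdif_def by auto
    have "psum x mod 2 = c" using hh_psum[OF c rd] rho_mod[OF c] x by simp
    moreover have "1 \<le> fst x \<and> fst x \<le> int m \<and> 1 \<le> snd x \<and> snd x \<le> int m"
      by (rule bounds1[OF s rho_cases h(3,1,2)])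
    ultimately show "x \<in> Uc c m" unfolding Uc_def board_S_def psum_def by (auto simp: mem_Times_iff)
  qed
next
  show "Uc c m \<subseteq> hh c m ` Gb c m"
  proof
    fix x assume x: "x \<in> Uc c m"
    obtain i j where ij: "x = (i, j)" by (cases x)
    have h: "1 \<le> i" "i \<le> int m" "1 \<le> j" "j \<le> int m" "(i + j) mod 2 = c"
      using x ij by (auto simp: Uc_def board_S_def)
    have dm: "(i - j) mod 2 = c" by (rule t2[OF c h(5)])
    define r where "r = (if i + j - 2 < int m then i + j - 2 else 2 * int m + 1 - (i + j))"
    have r1: "0 \<le> r \<and> r < int m \<and> \<bar>i - j\<bar> \<le> r"
    proof (cases "i + j - 2 < int m")
      case True
      then show ?thesis unfolding r_def using h(1-4) by (simp add: abs_le_iff)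
    next
      case False
      then show ?thesis unfolding r_def using h(1-4) by (simp add: abs_le_iff)
    qed
    have rG: "(r, i - j) \<in> Gb c m" unfolding Gb_def Col_def using r1 dm by auto
    have rr: "rho c m r = i + j"
    proof (cases "i + j - 2 < int m")
      case True
      then show ?thesis unfolding r_def rho_def using h(5) by simp
    next
      case False
      then show ?thesis unfolding r_def rho_def using t3[OF c h(5), of "int m"] by simp
    qed
    have a: "i + j + (i - j) = 2 * i" "i + j - (i - j) = 2 * j" by simp_all
    have "hh c m (r, i - j) = (i, j)" by (simp only: hh_def fst_conv snd_conv rr a) simp
    then show "x \<in> hh c m ` Gb c m" using rG ij by force
  qed
qed

lemma inj_rho_fst: assumes "P \<subseteq> Gb c m" shows "inj_on (rho c m) (fst ` P)"
proof (rule inj_onI)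
  fix x y assume "x \<in> fst ` P" "y \<in> fst ` P" "rho c m x = rho c m y"
  moreover have "\<And>z. z \<in> fst ` P \<Longrightarrow> 0 \<le> z \<and> z < int m" using assms by (auto simp: Gb_def)
  ultimately show "x = y" using rho_inj by blast
qed

lemma inj_transfer:
  assumes c: "c = 0 \<or> c = 1" and P: "P \<subseteq> Gb c m"
  shows "inj_on psum (hh c m ` P) \<longleftrightarrow> inj_on fst P"
    and "inj_on pdif (hh c m ` P) \<longleftrightarrow> inj_on snd P"
proof -
  have ih: "inj_on (hh c m) P" using hh_inj[OF c] P by (rule inj_on_subset)
  have "inj_on psum (hh c m ` P) \<longleftrightarrow> inj_on (psum \<circ> hh c m) P" by (rule comp_inj_on_iff[OF ih])
  also have "\<dots> \<longleftrightarrow> inj_on (rho c m \<circ> fst) P"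
    by (rule inj_on_cong) (use hh_psum(1)[OF c] P in auto)
  also have "\<dots> \<longleftrightarrow> inj_on fst P"
    using inj_on_imageI2[of "rho c m" fst P] comp_inj_on[of fst P "rho c m"] inj_rho_fst[OF P] by blast
  finally show "inj_on psum (hh c m ` P) \<longleftrightarrow> inj_on fst P" .
  have "inj_on pdif (hh c m ` P) \<longleftrightarrow> inj_on (pdif \<circ> hh c m) P" by (rule comp_inj_on_iff[OF ih])
  also have "\<dots> \<longleftrightarrow> inj_on snd P"
    by (rule inj_on_cong) (use hh_psum(2)[OF c] P in auto)
  finally show "inj_on pdif (hh c m ` P) \<longleftrightarrow> inj_on snd P" .
qed

lemma nab_rk: assumes c: "c = 0 \<or> c = 1" shows "card (nab (Uc c m) k) = card (rk c m k)"
proof -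
  have eq: "nab (Uc c m) k = image (hh c m) ` rk c m k"
  proof
    show "image (hh c m) ` rk c m k \<subseteq> nab (Uc c m) k"
    proof
      fix A assume "A \<in> image (hh c m) ` rk c m k"
      then obtain P where P: "P \<in> rk c m k" and A: "A = hh c m ` P" by auto
      have PG: "P \<subseteq> Gb c m" using P by (simp add: rk_def)
      have "A \<subseteq> Uc c m" using PG hh_img[OF c] A by auto
      moreover have "card A = k" using P A card_image[OF inj_on_subset[OF hh_inj[OF c] PG]]
        by (simp add: rk_def)
      moreover have "inj_on psum A" "inj_on pdif A" using inj_transfer[OF c PG] P A by (auto simp: rk_def)
      ultimately show "A \<in> nab (Uc c m) k" by (simp add: nab_def)
    qed
  next
    show "nab (Uc c m) k \<subseteq> image (hh c m) ` rk c m k"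
    proof
      fix A assume A: "A \<in> nab (Uc c m) k"
      then have "A \<subseteq> hh c m ` Gb c m" using hh_img[OF c] by (simp add: nab_def)
      then obtain P where PG: "P \<subseteq> Gb c m" and AP: "A = hh c m ` P" by (auto simp: subset_image_iff)
      have "card P = k" using A AP card_image[OF inj_on_subset[OF hh_inj[OF c] PG]]
        by (simp add: nab_def)
      moreover have "inj_on fst P" "inj_on snd P" using inj_transfer[OF c PG] A AP by (auto simp: nab_def)
      ultimately have "P \<in> rk c m k" using PG by (simp add: rk_def)
      then show "A \<in> image (hh c m) ` rk c m k" using AP by blast
    qed
  qed
  have inj: "inj_on (image (hh c m)) (rk c m k)"
    by (rule inj_on_subset[OF inj_on_image_Pow[OF hh_inj[OF c]]]) (auto simp: rk_def)
  show ?thesis unfolding eq card_image[OF inj] ..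
qed

lemma B_S_nab: "B_S m k = card (nab (board_S m) k)"
proof -
  have "\<And>A. nonattacking_bishops A \<longleftrightarrow> inj_on psum A \<and> inj_on pdif A"
    unfolding nonattacking_bishops_def inj_on_def psum_def pdif_def by blast
  then show ?thesis unfolding B_S_def nab_def by simp
qed

lemma finite_board: "finite (board_S m)"
  by (simp add: board_S_def)

lemma board_split: "board_S m = Uc 0 m \<union> Uc 1 m"
  unfolding Uc_def by auto

lemma t4: "((a::int) + b) mod 2 = 0 \<Longrightarrow> (c + d) mod 2 = 1 \<Longrightarrow> a - b \<noteq> c - d"
  by presburger

theorem main_int:
  "int (B_S m k) = (\<Sum>j = 0..k. F (m div 2) m j * F ((m + 1) div 2) m (k - j))"
proof -
  have sep: "psum x \<noteq> psum y \<and> pdif x \<noteq> pdif y" if "x \<in> Uc 0 m" "y \<in> Uc 1 m" for x y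
    using that t4[of "fst x" "snd x" "fst y" "snd y"] unfolding Uc_def psum_def pdif_def by auto
  have "B_S m k = (\<Sum>j = 0..k. card (nab (Uc 1 m) j) * card (nab (Uc 0 m) (k - j)))"
    unfolding B_S_nab board_split
    by (rule split_count) (use finite_board[of m] sep in \<open>auto simp: Uc_def\<close>)
  also have "\<dots> = (\<Sum>j = 0..k. card (rk 1 m j) * card (rk 0 m (k - j)))"
    by (simp add: nab_rk)
  finally have "int (B_S m k) = (\<Sum>j = 0..k. int (card (rk 1 m j)) * int (card (rk 0 m (k - j))))"
    by simp
  also have "\<dots> = (\<Sum>j = 0..k. F (m div 2) m j * F ((m + 1) div 2) m (k - j))"
    using rk_F[of 1 m] rk_F[of 0 m] by (simp add: bc_def)
  finally show ?thesis .
qed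

theorem theorem2p3:
  fixes m k :: nat
  shows "int (B_S m k) =
    (\<Sum>j = 0..k. \<Sum>i = 0..j.
       int ((m div 2) choose i) * Stirling2_ext (int m - int i) (int m - int j) *
       (\<Sum>l = 0..k - j. int (((m + 1) div 2) choose l) *
          Stirling2_ext (int m - int l) (int m - int k + int j)))"
  unfolding main_int
proof (rule sum.cong[OF refl])
  fix j assume "j \<in> {0..k}"
  then have eq: "int m - int (k - j) = int m - int k + int j" by auto
  then show "F (m div 2) m j * F ((m + 1) div 2) m (k - j) =
    (\<Sum>i = 0..j. int ((m div 2) choose i) * Stirling2_ext (int m - int i) (int m - int j) *
       (\<Sum>l = 0..k - j. int (((m + 1) div 2) choose l) *
          Stirling2_ext (int m - int l) (int m - int k + int j)))"
    by (simp only: F_def sum_distrib_right eq)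
qed

end
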